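(* Assume (H1), (H2), (H3). Then for every $\epsilon>0$ there is a finite constant $A=A(\epsilon)$ such that for all $k\ge1$, $$\|\psi_k\|_\infty\le A\,e^{\epsilon\lambda_k}.$$
   Context: Let $q\in C^1([0,\infty))$, $\gamma(y)=2\int_0^yq$, $\mathcal Lu=\frac12u''-qu'$, $\mu(dx)=2e^{-\gamma(x)}dx$ on $[0,\infty)$. (H1): $\int_0^\infty e^{\gamma(y)}\int_y^\infty e^{-\gamma(\xi)}d\xi\,dy<\infty$. (H2): $q(x)\to\infty$ and $q'(x)/q(x)^2\to0$. (H3): there exist $a>0$, $x_0\ge0$ such that $\inf\{q(y):y\ge x\}\ge a\,q(x)$ for all $x\ge x_0$. Known under (H1),(H2): the generator in $L^2(\mu)$ of the diffusion $dX_t=dB_t-q(X_t)dt$ killed at $0$ (minimal closed extension of $\mathcal L$ on compactly supported $C^2$ functions in $(0,\infty)$) has purely discrete spectrum of simple eigenvalues $-\lambda_k$, $0<\lambda_1<\lambda_2<\cdots$, with $L^2(\mu)$-orthonormal eigenfunctions $\psi_k\in C^2$, $\mathcal L\psi_k=-\lambda_k\psi_k$, $\psi_k(0)=0$, each bounded. *)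

theory Defs
  imports "HOL-Analysis.Analysis"
begin

definition gam :: "(real \<Rightarrow> real) \<Rightarrow> real \<Rightarrow> real" where
  "gam q y = 2 * integral {0..y} q"

definition mu :: "(real \<Rightarrow> real) \<Rightarrow> real measure" where
  "mu q = density lborel (\<lambda>x. ennreal (indicator {0..} x * 2 * exp (- gam q x)))"

definition H1 :: "(real \<Rightarrow> real) \<Rightarrow> bool" where
  "H1 q \<longleftrightarrow>
     (\<integral>\<^sup>+ y. ennreal (indicator {0..} y * exp (gam q y)) *
        (\<integral>\<^sup>+ \<xi>. ennreal (indicator {y..} \<xi> * exp (- gam q \<xi>)) \<partial>lborel) \<partial>lborel) < \<infinity>"

text \<open>(H2), with q' the derivative of q\<close>
definition H2 :: "(real \<Rightarrow> real) \<Rightarrow> (real \<Rightarrow> real) \<Rightarrow> bool" where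
  "H2 q q' \<longleftrightarrow> filterlim q at_top at_top \<and>
     ((\<lambda>x. q' x / (q x)\<^sup>2) \<longlongrightarrow> 0) at_top"

definition H3 :: "(real \<Rightarrow> real) \<Rightarrow> bool" where
  "H3 q \<longleftrightarrow> (\<exists>a>0. \<exists>x0\<ge>0. \<forall>x\<ge>x0. Inf (q ` {x..}) \<ge> a * q x)"

end

theory Submission
  imports Defs "HOL-Analysis.Analysis"
begin

lemma mono_within:
  fixes g g' :: "real \<Rightarrow> real"
  assumes ab: "a \<le> b"
    and d: "\<And>x. a \<le> x \<Longrightarrow> x \<le> b \<Longrightarrow> (g has_real_derivative g' x) (at x within {a..b})"
    and nn: "\<And>x. a \<le> x \<Longrightarrow> x \<le> b \<Longrightarrow> g' x \<ge> 0"
  shows "g a \<le> g b"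
proof -
  have "\<And>x. a \<le> x \<Longrightarrow> x \<le> b \<Longrightarrow> (g has_derivative (*) (g' x)) (at x within {a..b})"
    using d by (simp add: has_field_derivative_def mult.commute)
  from mvt_very_simple[OF ab this]
  obtain x where "x \<in> {a..b}" "g b - g a = g' x * (b - a)" by blast
  moreover have "g' x * (b - a) \<ge> 0" using nn[of x] ab \<open>x \<in> {a..b}\<close> by simp
  ultimately show ?thesis by simp
qed

lemma first_fail:
  fixes f g :: "real \<Rightarrow> real"
  assumes cf: "continuous_on {a..} f" and cg: "continuous_on {a..} g"
    and fa: "f a > 0" and ga: "g a > 0"
    and step: "\<And>b. a < b \<Longrightarrow> (\<forall>z\<in>{a..<b}. f z > 0 \<and> g z > 0) \<Longrightarrow> f b \<ge> 0 \<Longrightarrow> g b \<ge> 0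
               \<Longrightarrow> f b > 0 \<and> g b > 0"
  shows "\<forall>z\<ge>a. f z > 0 \<and> g z > 0"
proof (rule ccontr)
  assume nt: "\<not> ?thesis"
  define S where "S = ({a..} \<inter> f -` {..0}) \<union> ({a..} \<inter> g -` {..0})"
  have Sne: "S \<noteq> {}" using nt unfolding S_def by (auto simp: not_less)
  have Sbdd: "bdd_below S" unfolding S_def by (rule bdd_belowI[of _ a]) auto
  have Scl: "closed S" unfolding S_def
    by (intro closed_Un continuous_closed_preimage cf cg) auto
  define b where "b = Inf S"
  have bS: "b \<in> S" unfolding b_def using closed_contains_Inf[OF Sne Sbdd Scl] .
  have ba: "b \<ge> a" using bS unfolding S_def by auto
  have low: "\<And>z. z \<in> S \<Longrightarrow> b \<le> z" unfolding b_def using Sbdd by (simp add: cInf_lower)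
  have bne: "b \<noteq> a" using bS fa ga unfolding S_def by auto
  hence ab: "a < b" using ba by simp
  have pos: "\<forall>z\<in>{a..<b}. f z > 0 \<and> g z > 0"
  proof
    fix z assume z: "z \<in> {a..<b}"
    have "z \<notin> S" using low[of z] z by auto
    thus "f z > 0 \<and> g z > 0" using z unfolding S_def by auto
  qed
  have "{a..<b} \<subseteq> {a..b} \<inter> f -` {0..}" using pos by auto
  moreover have "closed ({a..b} \<inter> f -` {0..})"
    by (intro continuous_closed_preimage continuous_on_subset[OF cf]) auto
  ultimately have "closure {a..<b} \<subseteq> {a..b} \<inter> f -` {0..}" by (rule closure_minimal)
  hence fb: "f b \<ge> 0" using ab by (auto simp: subset_eq)
  have "{a..<b} \<subseteq> {a..b} \<inter> g -` {0..}" using pos by auto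
  moreover have "closed ({a..b} \<inter> g -` {0..})"
    by (intro continuous_closed_preimage continuous_on_subset[OF cg]) auto
  ultimately have "closure {a..<b} \<subseteq> {a..b} \<inter> g -` {0..}" by (rule closure_minimal)
  hence gb: "g b \<ge> 0" using ab by (auto simp: subset_eq)
  have "f b > 0 \<and> g b > 0" using step[OF ab pos fb gb] .
  thus False using bS unfolding S_def by auto
qed

lemma riccati:
  fixes q q' v v' v'' :: "real \<Rightarrow> real" and lam y B z1 :: real
  assumes y0: "y \<ge> 0"
    and qd: "\<And>x. x \<ge> y \<Longrightarrow> (q has_real_derivative q' x) (at x within {y..})"
    and vd1: "\<And>x. x \<ge> y \<Longrightarrow> (v has_real_derivative v' x) (at x within {y..})"
    and vd2: "\<And>x. x \<ge> y \<Longrightarrow> (v' has_real_derivative v'' x) (at x within {y..})"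
    and ode: "\<And>x. x \<ge> y \<Longrightarrow> v'' x = 2 * q x * v' x - 2 * lam * v x"
    and bdd: "\<And>x. x \<ge> y \<Longrightarrow> v x \<le> B"
    and lam: "lam > 0"
    and qpos: "\<And>x. x \<ge> y \<Longrightarrow> q x > 0"
    and q8: "\<And>x. x \<ge> y \<Longrightarrow> 8 * lam \<le> (q x)^2"
    and qd4: "\<And>x. x \<ge> y \<Longrightarrow> - ((q x)^2) \<le> 4 * q' x"
    and z1: "z1 \<ge> y"
  shows "\<not> (v' z1 > 0 \<and> q z1 * v' z1 > 4 * lam * v z1)"
proof
  assume P: "v' z1 > 0 \<and> q z1 * v' z1 > 4 * lam * v z1"
  define D where "D x = q x * v' x - 4 * lam * v x" for x
  have sub: "\<And>x. x \<ge> z1 \<Longrightarrow> {z1..} \<subseteq> {y..}" using z1 by auto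
  have qd': "\<And>x. x \<ge> z1 \<Longrightarrow> (q has_real_derivative q' x) (at x within {z1..})"
    using qd z1 by (meson has_field_derivative_subset order_trans sub)
  have vd1': "\<And>x. x \<ge> z1 \<Longrightarrow> (v has_real_derivative v' x) (at x within {z1..})"
    using vd1 z1 by (meson has_field_derivative_subset order_trans sub)
  have vd2': "\<And>x. x \<ge> z1 \<Longrightarrow> (v' has_real_derivative v'' x) (at x within {z1..})"
    using vd2 z1 by (meson has_field_derivative_subset order_trans sub)
  have Dd: "\<And>x. x \<ge> z1 \<Longrightarrow> (D has_real_derivative (q' x * v' x + q x * v'' x - 4 * lam * v' x)) (at x within {z1..})"
  proof -
    fix x assume x: "x \<ge> z1"
    show "(D has_real_derivative (q' x * v' x + q x * v'' x - 4 * lam * v' x)) (at x within {z1..})"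
      unfolding D_def
      by (rule DERIV_cong[OF DERIV_diff[OF DERIV_mult'[OF qd'[OF x] vd2'[OF x]] DERIV_cmult[OF vd1'[OF x]]]])
         (simp add: algebra_simps)
  qed
  have cv': "continuous_on {z1..} v'" by (rule DERIV_continuous_on[OF vd2']) auto
  have cD: "continuous_on {z1..} D" by (rule DERIV_continuous_on[OF Dd]) auto
  have v''nn: "v'' x \<ge> 0" if "x \<ge> z1" "v' x \<ge> 0" "D x \<ge> 0" for x
  proof -
    have "v'' x = D x / 2 + 3/2 * q x * v' x" using ode[of x] that z1 unfolding D_def by (simp add: field_simps)
    moreover have "q x * v' x \<ge> 0" using qpos[of x] that z1 by simp
    ultimately show ?thesis using that by simp
  qed
  have all: "\<forall>z\<ge>z1. v' z > 0 \<and> D z > 0"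
  proof (rule first_fail[OF cv' cD])
    show "v' z1 > 0" "D z1 > 0" using P unfolding D_def by auto
  next
    fix b assume ab: "z1 < b" and pos: "\<forall>z\<in>{z1..<b}. v' z > 0 \<and> D z > 0"
      and fb: "v' b \<ge> 0" and gb: "D b \<ge> 0"
    have "v' z1 \<le> v' b"
    proof (rule mono_within[of z1 b v' v''])
      show "z1 \<le> b" using ab by simp
      fix x assume x: "z1 \<le> x" "x \<le> b"
      show "(v' has_real_derivative v'' x) (at x within {z1..b})"
        using vd2'[of x] x by (meson atLeastAtMost_iff atLeast_iff has_field_derivative_subset subsetI)
      show "v'' x \<ge> 0"
      proof (cases "x = b")
        case True thus ?thesis using v''nn[of b] fb gb ab by simp
      next
        case False
        hence "x \<in> {z1..<b}" using x by auto
        hence "v' x > 0 \<and> D x > 0" using pos by blast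
        thus ?thesis using v''nn[of x] x by auto
      qed
    qed
    hence vb: "v' b > 0" using P by simp
    have "D b > 0"
    proof (rule ccontr)
      assume "\<not> D b > 0"
      hence D0: "D b = 0" using gb by simp
      have yb: "b \<ge> y" "b > z1" using ab z1 by auto
      have atb: "at b within {z1..b+1} = at b" using ab by (intro at_within_Icc_at) auto
      have "(D has_real_derivative (q' b * v' b + q b * v'' b - 4 * lam * v' b)) (at b within {z1..b+1})"
        by (rule has_field_derivative_subset[OF Dd[of b]]) (use ab in auto)
      hence der: "(D has_real_derivative (q' b * v' b + q b * v'' b - 4 * lam * v' b)) (at b)"
        using atb by simp
      have e1: "4 * lam * v b = q b * v' b" using D0 unfolding D_def by simp
      have "q' b * v' b + q b * v'' b - 4 * lam * v' b = v' b * (q' b + 3/2 * (q b)^2 - 4 * lam)"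
      proof -
        have "q b * v'' b = 2 * (q b)^2 * v' b - q b * (2 * lam * v b)"
          unfolding ode[OF yb(1)] by (simp add: algebra_simps power2_eq_square)
        also have "q b * (2 * lam * v b) = (q b)^2 * v' b / 2"
          using e1 by (simp add: power2_eq_square algebra_simps)
        finally show ?thesis by (simp add: algebra_simps power2_eq_square)
      qed
      moreover have "q' b + 3/2 * (q b)^2 - 4 * lam > 0"
      proof -
        have "(q b)^2 > 0" using qpos[of b] yb by simp
        thus ?thesis using q8[of b] qd4[of b] yb by linarith
      qed
      ultimately have dpos: "q' b * v' b + q b * v'' b - 4 * lam * v' b > 0" using vb by simp
      from DERIV_pos_inc_left[OF der dpos] obtain d where d: "d > 0"
        "\<And>h. h > 0 \<Longrightarrow> h < d \<Longrightarrow> D (b - h) < D b" by blast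
      define h where "h = min (d/2) ((b - z1)/2)"
      have hle: "h \<le> (b - z1)/2" "h \<le> d/2" unfolding h_def by (rule min.cobounded2, rule min.cobounded1)
      have hpos: "h > 0" unfolding h_def using d ab by simp
      have h: "h > 0" "h < d" "b - h \<in> {z1..<b}" using d ab hle hpos by auto
      have "D (b - h) < 0" using d(2)[OF h(1,2)] D0 by simp
      moreover have "D (b - h) > 0" using pos h(3) by blast
      ultimately show False by linarith
    qed
    thus "v' b > 0 \<and> D b > 0" using vb by simp
  qed
  define c where "c = v' z1"
  have c: "c > 0" using P c_def by simp
  have grow: "v z \<ge> v z1 + c * (z - z1)" if z: "z \<ge> z1" for z
  proof -
    have "(\<lambda>s. v s - c * s) z1 \<le> (\<lambda>s. v s - c * s) z"
    proof (rule mono_within[of z1 z _ "\<lambda>s. v' s - c"])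
      show "z1 \<le> z" using z .
      fix x assume x: "z1 \<le> x" "x \<le> z"
      have vx: "(v has_real_derivative v' x) (at x within {z1..z})"
        using vd1'[of x] x by (meson atLeastAtMost_iff atLeast_iff has_field_derivative_subset subsetI)
      show "((\<lambda>s. v s - c * s) has_real_derivative v' x - c) (at x within {z1..z})"
        by (rule DERIV_cong[OF DERIV_diff[OF vx DERIV_cmult[OF DERIV_ident]]]) simp
      have "v' z1 \<le> v' x"
      proof (rule mono_within[of z1 x v' v''])
        show "z1 \<le> x" using x by simp
        fix t assume t: "z1 \<le> t" "t \<le> x"
        show "(v' has_real_derivative v'' t) (at t within {z1..x})"
          using vd2'[of t] t by (meson atLeastAtMost_iff atLeast_iff has_field_derivative_subset subsetI)
        have "v' t > 0 \<and> D t > 0" using all t by simp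
        thus "v'' t \<ge> 0" using v''nn[of t] t by simp
      qed
      thus "v' x - c \<ge> 0" unfolding c_def by simp
    qed
    thus ?thesis by (simp add: algebra_simps)
  qed
  define z where "z = z1 + (\<bar>B\<bar> + \<bar>v z1\<bar> + 1) / c"
  have zz: "z \<ge> z1" unfolding z_def using c by simp
  have "c * (z - z1) = \<bar>B\<bar> + \<bar>v z1\<bar> + 1" unfolding z_def using c by simp
  hence "v z > B" using grow[OF zz] by linarith
  moreover have "v z \<le> B" using bdd[of z] zz z1 by simp
  ultimately show False by simp
qed

lemma sol_bound:
  fixes q q' u u' u'' :: "real \<Rightarrow> real" and lam y Q eta W B d :: real
  assumes qd: "\<And>x. x \<ge> 0 \<Longrightarrow> (q has_real_derivative q' x) (at x within {0..})"
    and ud1: "\<And>x. x \<ge> 0 \<Longrightarrow> (u has_real_derivative u' x) (at x within {0..})"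
    and ud2: "\<And>x. x \<ge> 0 \<Longrightarrow> (u' has_real_derivative u'' x) (at x within {0..})"
    and ode: "\<And>x. x \<ge> 0 \<Longrightarrow> u'' x = 2 * q x * u' x - 2 * lam * u x"
    and bdd: "\<And>x. x \<ge> 0 \<Longrightarrow> \<bar>u x\<bar> \<le> B"
    and lam: "lam > 0" and y0: "y \<ge> 0" and Q0: "Q \<ge> 0" and d0: "d \<ge> 0"
    and qQ: "\<And>x. x \<ge> 0 \<Longrightarrow> q x \<ge> - Q"
    and qpos: "\<And>x. x \<ge> y \<Longrightarrow> q x > 0"
    and q8: "\<And>x. x \<ge> y \<Longrightarrow> 8 * lam \<le> (q x)^2"
    and qd4: "\<And>x. x \<ge> y \<Longrightarrow> - ((q x)^2) \<le> 4 * q' x"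
    and tail: "\<And>z. z \<ge> y \<Longrightarrow> integral {y..z} (\<lambda>x. 1 / q x) \<le> eta"
    and L2: "\<And>c. (\<And>s. y \<le> s \<Longrightarrow> s \<le> y + d \<Longrightarrow> c \<le> (u s)^2) \<Longrightarrow> c \<le> W"
    and z0: "z \<ge> 0"
  shows "(u z)^2 \<le> 2 * W * exp (4 * Q * y + 32 * lam * eta)"
proof -
  have qc: "continuous_on {0..} q" by (rule DERIV_continuous_on[OF qd]) auto
  have sub: "{y..} \<subseteq> {0..}" using y0 by auto
  have qdy: "\<And>x. x \<ge> y \<Longrightarrow> (q has_real_derivative q' x) (at x within {y..})"
    using qd y0 by (meson has_field_derivative_subset order_trans sub)
  have ud1y: "\<And>x. x \<ge> y \<Longrightarrow> (u has_real_derivative u' x) (at x within {y..})"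
    using ud1 y0 by (meson has_field_derivative_subset order_trans sub)
  have ud2y: "\<And>x. x \<ge> y \<Longrightarrow> (u' has_real_derivative u'' x) (at x within {y..})"
    using ud2 y0 by (meson has_field_derivative_subset order_trans sub)
  have nud1y: "\<And>x. x \<ge> y \<Longrightarrow> ((\<lambda>x. - u x) has_real_derivative - u' x) (at x within {y..})"
    using ud1y by (rule DERIV_minus)
  have nud2y: "\<And>x. x \<ge> y \<Longrightarrow> ((\<lambda>x. - u' x) has_real_derivative - u'' x) (at x within {y..})"
    using ud2y by (rule DERIV_minus)
  have odey: "\<And>x. x \<ge> y \<Longrightarrow> u'' x = 2 * q x * u' x - 2 * lam * u x" using ode y0 by simp
  have bddy: "\<And>x. x \<ge> y \<Longrightarrow> u x \<le> B" using bdd y0 by (simp add: abs_le_iff)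
  have odey2: "\<And>x. x \<ge> y \<Longrightarrow> - u'' x = 2 * q x * (- u' x) - 2 * lam * (- u x)" using odey by simp
  have bddy2: "\<And>x. x \<ge> y \<Longrightarrow> - u x \<le> B" using bdd y0 by (simp add: abs_le_iff)
  have R1: "\<not> (u' z1 > 0 \<and> q z1 * u' z1 > 4 * lam * u z1)" if "z1 \<ge> y" for z1
    by (rule riccati[OF y0 qdy ud1y ud2y odey bddy lam qpos q8 qd4 that])
  have R2: "\<not> ((- u' z1) > 0 \<and> q z1 * (- u' z1) > 4 * lam * (- u z1))" if "z1 \<ge> y" for z1
    by (rule riccati[OF y0 qdy nud1y nud2y odey2 bddy2 lam qpos q8 qd4 that])
  have R: "(q s * u' s)^2 \<le> (4 * lam * u s)^2" if s: "s \<ge> y" for s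
  proof -
    have qs: "q s > 0" using qpos s by simp
    consider "u' s > 0" | "u' s < 0" | "u' s = 0" by linarith
    thus ?thesis
    proof cases
      case 1
      hence "0 < q s * u' s" "q s * u' s \<le> 4 * lam * u s" using R1[OF s] qs by auto
      thus ?thesis by (intro power_mono) auto
    next
      case 2
      hence "0 < - (q s * u' s)" "- (q s * u' s) \<le> - (4 * lam * u s)" using R2[OF s] qs
        by (auto simp: mult_pos_neg)
      hence "(- (q s * u' s))^2 \<le> (- (4 * lam * u s))^2" by (intro power_mono) auto
      thus ?thesis by simp
    qed simp
  qed
  define H where "H x = (u x)^2 + (u' x)^2 / (2 * lam)" for x
  define HD where "HD x = 2 * q x * (u' x)^2 / lam" for x
  have Hd: "(H has_real_derivative HD x) (at x within {0..})" if x: "x \<ge> 0" for x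
  proof -
    have d1: "((\<lambda>x. (u x)^2) has_real_derivative 2 * u x * u' x) (at x within {0..})"
      using DERIV_power[OF ud1[OF x], of 2] by (simp add: mult_ac)
    have d2: "((\<lambda>x. (u' x)^2) has_real_derivative 2 * u' x * u'' x) (at x within {0..})"
      using DERIV_power[OF ud2[OF x], of 2] by (simp add: mult_ac)
    have "(H has_real_derivative (2 * u x * u' x + 2 * u' x * u'' x / (2 * lam))) (at x within {0..})"
      unfolding H_def by (rule DERIV_add[OF d1 DERIV_cdivide[OF d2]])
    moreover have "2 * u x * u' x + 2 * u' x * u'' x / (2 * lam) = HD x"
      unfolding HD_def ode[OF x] using lam by (simp add: divide_simps) (simp add: algebra_simps power2_eq_square)
    ultimately show ?thesis by simp
  qed
  have Hd': "(H has_real_derivative HD x) (at x within {a..b})" if "0 \<le> a" "a \<le> x" "x \<le> b" for a b x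
    using Hd[of x] that by (meson atLeastAtMost_iff atLeast_iff has_field_derivative_subset order_trans subsetI)
  have uH: "(u x)^2 \<le> H x" for x unfolding H_def using lam by simp
  have Hmono: "H y \<le> H s" if "s \<ge> y" for s
  proof (rule mono_within[of y s H HD])
    fix x assume x: "y \<le> x" "x \<le> s"
    show "(H has_real_derivative HD x) (at x within {y..s})" using Hd'[of y x s] x y0 by simp
    show "0 \<le> HD x" unfolding HD_def using qpos[of x] x lam by (intro divide_nonneg_pos mult_nonneg_nonneg) auto
  qed (use that in simp)
  have H2u: "H s \<le> 2 * (u s)^2" if s: "s \<ge> y" for s
  proof -
    have "8 * lam * (u' s)^2 \<le> (q s)^2 * (u' s)^2" using q8[OF s] by (simp add: mult_right_mono)
    also have "\<dots> = (q s * u' s)^2" by (simp add: power_mult_distrib)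
    also have "\<dots> \<le> (4 * lam * u s)^2" using R[OF s] .
    finally have "8 * lam * (u' s)^2 \<le> 16 * lam^2 * (u s)^2" by (simp add: power_mult_distrib)
    hence "(u' s)^2 \<le> 2 * lam * (u s)^2" using lam by (simp add: power2_eq_square)
    hence "(u' s)^2 / (2 * lam) \<le> (u s)^2" using lam by (simp add: divide_le_eq mult.commute)
    thus ?thesis unfolding H_def by simp
  qed
  have HyW: "H y / 2 \<le> W"
  proof (rule L2)
    fix s assume s: "y \<le> s" "s \<le> y + d"
    have "H y \<le> H s" using Hmono s by simp
    also have "\<dots> \<le> 2 * (u s)^2" using H2u s by simp
    finally show "H y / 2 \<le> (u s)^2" by simp
  qed
  have eta0: "eta \<ge> 0" using tail[of y] by simp
  show ?thesis
  proof (cases "z \<ge> y")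
    case True
    define F where "F s = integral {y..s} (\<lambda>x. 1 / q x)" for s
    define G where "G s = H s * exp (- (32 * lam) * F s)" for s
    have cq: "continuous_on {y..z} (\<lambda>x. 1 / q x)"
      by (intro continuous_intros continuous_on_subset[OF qc]) (use y0 qpos in \<open>auto simp: less_imp_neq[symmetric]\<close>)
    have Fd: "(F has_real_derivative 1 / q s) (at s within {y..z})" if "s \<in> {y..z}" for s
      unfolding F_def using integral_has_vector_derivative[OF cq that]
      by (simp add: has_real_derivative_iff_has_vector_derivative)
    have "(\<lambda>s. - G s) y \<le> (\<lambda>s. - G s) z"
    proof (rule mono_within[of y z _ "\<lambda>s. - (HD s * exp (- (32 * lam) * F s) + H s * (exp (- (32 * lam) * F s) * (- (32 * lam) * (1 / q s))))"])
      show "y \<le> z" using True .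
      fix s assume s: "y \<le> s" "s \<le> z"
      show "((\<lambda>s. - G s) has_real_derivative - (HD s * exp (- (32 * lam) * F s) + H s * (exp (- (32 * lam) * F s) * (- (32 * lam) * (1 / q s))))) (at s within {y..z})"
      proof -
        have e: "((\<lambda>s. exp (- (32 * lam) * F s)) has_real_derivative exp (- (32 * lam) * F s) * (- (32 * lam) * (1 / q s))) (at s within {y..z})"
          by (rule DERIV_chain2[OF DERIV_exp DERIV_cmult[OF Fd]]) (use s in auto)
        have m: "((\<lambda>s. H s * exp (- (32 * lam) * F s)) has_real_derivative H s * (exp (- (32 * lam) * F s) * (- (32 * lam) * (1 / q s))) + HD s * exp (- (32 * lam) * F s)) (at s within {y..z})"
          by (rule DERIV_mult'[OF Hd'[of y s z] e]) (use s y0 in auto)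
        show ?thesis unfolding G_def
          by (rule DERIV_cong[OF DERIV_minus[OF m]]) (simp add: algebra_simps)
      qed
      have qs: "q s > 0" using qpos s by simp
      have "HD s \<le> 32 * lam * H s / q s"
      proof -
        have "(q s * u' s)^2 \<le> (4 * lam * u s)^2" using R[of s] s by simp
        also have "\<dots> = 16 * lam^2 * (u s)^2" by (simp add: power_mult_distrib)
        also have "\<dots> \<le> 16 * lam^2 * H s" using uH[of s] by (intro mult_left_mono) auto
        finally have "(q s * u' s)^2 \<le> 16 * lam^2 * H s" .
        hence A: "(q s)^2 * (u' s)^2 \<le> 16 * lam^2 * H s" by (simp add: power_mult_distrib)
        hence "2 * ((q s)^2 * (u' s)^2) \<le> 2 * (16 * lam^2 * H s)" by (rule mult_left_mono) simp
        hence "2 * (q s)^2 * (u' s)^2 \<le> 32 * lam^2 * H s" by (simp add: mult_ac)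
        hence "2 * q s * (u' s)^2 / lam \<le> 32 * lam * H s / q s" using qs lam
          by (simp add: field_simps power2_eq_square)
        thus ?thesis unfolding HD_def by simp
      qed
      hence "HD s \<le> 32 * lam * (1 / q s) * H s" by simp
      hence "HD s * exp (- (32 * lam) * F s) \<le> 32 * lam * (1 / q s) * H s * exp (- (32 * lam) * F s)"
        by (rule mult_right_mono) simp
      thus "- (HD s * exp (- (32 * lam) * F s) + H s * (exp (- (32 * lam) * F s) * (- (32 * lam) * (1 / q s)))) \<ge> 0"
        by (simp add: algebra_simps)
    qed
    hence "G z \<le> G y" by simp
    moreover have "F y = 0" unfolding F_def by simp
    ultimately have "H z * exp (- (32 * lam) * F z) \<le> H y" unfolding G_def by simp
    hence calc: "H z * exp (- (32 * lam) * F z) * exp (32 * lam * F z) \<le> H y * exp (32 * lam * F z)"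
      by (rule mult_right_mono) simp
    have eq: "H z * exp (- (32 * lam) * F z) * exp (32 * lam * F z) = H z"
      by (simp add: mult.assoc exp_minus)
    have "H z \<le> H y * exp (32 * lam * F z)" using calc unfolding eq .
    also have "\<dots> \<le> H y * exp (32 * lam * eta)"
    proof (rule mult_left_mono)
      show "exp (32 * lam * F z) \<le> exp (32 * lam * eta)" using tail[OF True] lam unfolding F_def by simp
      show "0 \<le> H y" using uH[of y] zero_le_power2[of "u y"] by linarith
    qed
    also have "\<dots> \<le> 2 * W * exp (4 * Q * y + 32 * lam * eta)"
    proof (rule mult_mono)
      show "H y \<le> 2 * W" using HyW by simp
      show "exp (32 * lam * eta) \<le> exp (4 * Q * y + 32 * lam * eta)" using Q0 y0 by simp
      show "0 \<le> 2 * W" using HyW uH[of y] zero_le_power2[of "u y"] by linarith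
    qed simp
    finally show ?thesis using uH[of z] by simp
  next
    case False
    define G where "G s = H s * exp (4 * Q * s)" for s
    have "G z \<le> G y"
    proof (rule mono_within[of z y G "\<lambda>s. HD s * exp (4 * Q * s) + H s * (exp (4 * Q * s) * (4 * Q))"])
      show "z \<le> y" using False by simp
      fix s assume s: "z \<le> s" "s \<le> y"
      show "(G has_real_derivative HD s * exp (4 * Q * s) + H s * (exp (4 * Q * s) * (4 * Q))) (at s within {z..y})"
      proof -
        have e: "((\<lambda>s. exp (4 * Q * s)) has_real_derivative exp (4 * Q * s) * (4 * Q)) (at s within {z..y})"
          by (rule DERIV_chain2[OF DERIV_exp]) (auto intro!: derivative_eq_intros)
        show ?thesis unfolding G_def
          by (rule DERIV_cong[OF DERIV_mult'[OF Hd'[of z s y] e]]) (use s z0 in \<open>auto simp: algebra_simps\<close>)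
      qed
      have "HD s + H s * (4 * Q) = 2 * (q s + Q) * (u' s)^2 / lam + 4 * Q * (u s)^2"
        unfolding HD_def H_def using lam by (simp add: field_simps)
      also have "\<dots> \<ge> 0"
      proof -
        have qq: "0 \<le> q s + Q" using qQ[of s] s z0 by simp
        have "0 \<le> 2 * (q s + Q) * (u' s)^2 / lam" using qq lam by simp
        moreover have "0 \<le> 4 * Q * (u s)^2" using Q0 by simp
        ultimately show ?thesis by linarith
      qed
      finally have "0 \<le> (HD s + H s * (4 * Q)) * exp (4 * Q * s)" by simp
      thus "0 \<le> HD s * exp (4 * Q * s) + H s * (exp (4 * Q * s) * (4 * Q))" by (simp add: algebra_simps)
    qed
    hence "H z * exp (4 * Q * z) \<le> H y * exp (4 * Q * y)" unfolding G_def .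
    moreover have "H z \<le> H z * exp (4 * Q * z)"
      using mult_left_mono[of 1 "exp (4 * Q * z)" "H z"] Q0 z0 uH[of z] by (simp add: order_trans[OF zero_le_power2])
    moreover have "H y * exp (4 * Q * y) \<le> 2 * W * exp (4 * Q * y + 32 * lam * eta)"
    proof (rule mult_mono)
      show "H y \<le> 2 * W" using HyW by simp
      show "exp (4 * Q * y) \<le> exp (4 * Q * y + 32 * lam * eta)" using eta0 lam by simp
      show "0 \<le> 2 * W" using HyW uH[of y] zero_le_power2[of "u y"] by linarith
    qed simp
    ultimately show ?thesis using uH[of z] by linarith
  qed
qed

lemma gam_diff:
  assumes qc: "continuous_on {0..} q" and s: "0 \<le> s" "s \<le> t"
  shows "gam q t - gam q s = 2 * integral {s..t} q"
proof -
  have "q integrable_on {0..t}"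
    by (rule integrable_continuous_real, rule continuous_on_subset[OF qc]) auto
  from Henstock_Kurzweil_Integration.integral_combine[OF s this] show ?thesis unfolding gam_def by simp
qed

lemma gam_cont:
  assumes qc: "continuous_on {0..} q"
  shows "continuous_on {0..} (gam q)"
proof -
  have c: "continuous_on {-1..real n} (gam q)" for n :: nat
  proof -
    have "continuous_on {-1..0} (gam q)"
    proof (rule continuous_on_eq[OF continuous_on_const[of _ 0]])
      fix x :: real assume "x \<in> {-1..0}"
      thus "0 = gam q x" unfolding gam_def
        by (cases "x = 0") auto
    qed
    moreover have "continuous_on {0..real n} (gam q)"
    proof -
      have "q integrable_on {0..real n}"
        by (rule integrable_continuous_real, rule continuous_on_subset[OF qc]) auto
      from indefinite_integral_continuous_1[OF this]
      show ?thesis unfolding gam_def by (intro continuous_intros)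
    qed
    ultimately have "continuous_on ({-1..0} \<union> {0..real n}) (gam q)"
      by (intro continuous_on_closed_Un) auto
    moreover have "{-1..real n} = {-1..0} \<union> {0..real n}" by auto
    ultimately show ?thesis by simp
  qed
  have "continuous_on (\<Union>n. {-1<..<real n}) (gam q)"
  proof (rule continuous_on_open_Union)
    fix S assume "S \<in> range (\<lambda>n. {-1<..<real n})"
    then obtain n where S: "S = {-1<..<real n}" by blast
    show "open S" unfolding S by simp
    show "continuous_on S (gam q)" unfolding S by (rule continuous_on_subset[OF c[of n]]) auto
  qed
  moreover have "{0..} \<subseteq> (\<Union>n. {-1<..<real n})"
  proof
    fix x :: real assume "x \<in> {0..}"
    obtain n :: nat where "x < real n" using reals_Archimedean2 by blast
    thus "x \<in> (\<Union>n. {-1<..<real n})" using \<open>x \<in> {0..}\<close> by auto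
  qed
  ultimately show ?thesis by (rule continuous_on_subset)
qed

lemma L2_lower:
  fixes q u :: "real \<Rightarrow> real"
  assumes qc: "continuous_on {0..} q"
    and um: "(\<lambda>x. (u x)^2) \<in> borel_measurable (mu q)" and ui: "integrable (mu q) (\<lambda>x. (u x)^2)"
    and n1: "(\<integral>x. u x * u x \<partial>(mu q)) = 1"
    and y0: "0 \<le> y" and h0: "0 \<le> h"
    and bnd: "\<And>s. y \<le> s \<Longrightarrow> s \<le> y + h \<Longrightarrow> c \<le> 2 * exp (- gam q s) * (u s)^2"
  shows "c * h \<le> 1"
proof -
  define g where "g x = indicator {0..} x * 2 * exp (- gam q x)" for x :: real
  have gb: "(\<lambda>x. indicator {0..} x *\<^sub>R (2 * exp (- gam q x))) \<in> borel_measurable borel"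
    by (rule borel_measurable_continuous_on_indicator) (auto intro!: continuous_intros gam_cont[OF qc])
  have gm: "g \<in> borel_measurable lborel"
    using gb unfolding g_def by (simp add: mult.assoc)
  have mu: "mu q = density lborel (\<lambda>x. ennreal (g x))" unfolding mu_def g_def ..
  have um': "(\<lambda>x. (u x)^2) \<in> borel_measurable lborel" using um unfolding mu by simp
  have gnn: "AE x in lborel. 0 \<le> g x" unfolding g_def by (auto simp: indicator_def)
  have ieq: "(\<integral>x. (u x)^2 \<partial>(mu q)) = (\<integral>x. g x *\<^sub>R (u x)^2 \<partial>lborel)"
    unfolding mu by (rule integral_density[OF um' gm gnn])
  have iint: "integrable lborel (\<lambda>x. g x *\<^sub>R (u x)^2)"
    using ui unfolding mu by (subst (asm) integrable_density[OF um' gm gnn])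
  have one: "(\<integral>x. g x *\<^sub>R (u x)^2 \<partial>lborel) = 1"
    using n1 ieq by (simp add: power2_eq_square)
  have cint: "integrable lborel (\<lambda>x. indicator {y..y+h} x *\<^sub>R c)"
    by (rule borel_integrable_compact) auto
  have "(\<integral>x. indicator {y..y+h} x *\<^sub>R c \<partial>lborel) \<le> (\<integral>x. g x *\<^sub>R (u x)^2 \<partial>lborel)"
  proof (rule integral_mono[OF cint iint])
    fix x :: real
    show "indicator {y..y+h} x *\<^sub>R c \<le> g x *\<^sub>R (u x)^2"
    proof (cases "x \<in> {y..y+h}")
      case True
      hence "x \<ge> 0" using y0 by auto
      thus ?thesis using True bnd[of x] unfolding g_def by (simp add: indicator_def)
    next
      case False
      hence "indicator {y..y+h} x = (0::real)" by simp
      moreover have "0 \<le> g x * (u x)^2" unfolding g_def by (simp add: indicator_def)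
      ultimately show ?thesis by simp
    qed
  qed
  moreover have "(\<integral>x. indicator {y..y+h} x *\<^sub>R c \<partial>lborel) = h * c"
    using h0 by (simp add: integral_scaleR_left)
  ultimately have "h * c \<le> 1" using one by linarith
  thus ?thesis by (simp add: mult.commute)
qed

lemma H1_tail:
  fixes q :: "real \<Rightarrow> real"
  assumes qc: "continuous_on {0..} q" and h1: "H1 q" and Y0: "Y0 \<ge> 0"
    and q1: "\<And>x. x \<ge> Y0 \<Longrightarrow> q x \<ge> 1"
    and loc: "\<And>x s. Y0 \<le> x \<Longrightarrow> x \<le> s \<Longrightarrow> s \<le> x + 2 / q x \<Longrightarrow> gam q s \<le> gam q x + 8"
    and eta: "eta > 0"
  shows "\<exists>Y\<ge>Y0. \<forall>s t. Y \<le> s \<longrightarrow> s \<le> t \<longrightarrow> integral {s..t} (\<lambda>x. 1 / q x) \<le> eta"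
proof -
  define f where "f x = indicator {Y0..} x * (1 / q x)" for x :: real
  define K where "K y = ennreal (indicator {0..} y * exp (gam q y)) *
        (\<integral>\<^sup>+ \<xi>. ennreal (indicator {y..} \<xi> * exp (- gam q \<xi>)) \<partial>lborel)" for y :: real
  have Kfin: "(\<integral>\<^sup>+ y. K y \<partial>lborel) < \<infinity>" using h1 unfolding H1_def K_def .
  define c where "c = 2 * exp (-8::real)"
  have c0: "c > 0" unfolding c_def by simp
  have f0: "f x \<ge> 0" for x
  proof (cases "x \<ge> Y0")
    case True thus ?thesis unfolding f_def using q1[of x] by simp
  qed (simp add: f_def)
  have pw: "ennreal (c * f y) \<le> K y" for y
  proof (cases "y \<ge> Y0")
    case False thus ?thesis unfolding f_def by simp
  next
    case True
    define h where "h = 2 / q y"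
    have qy: "q y \<ge> 1" using q1 True by simp
    have h0: "h > 0" unfolding h_def using qy by simp
    have "(\<integral>\<^sup>+ \<xi>. ennreal (exp (- (gam q y + 8))) * indicator {y..y+h} \<xi> \<partial>lborel)
          \<le> (\<integral>\<^sup>+ \<xi>. ennreal (indicator {y..} \<xi> * exp (- gam q \<xi>)) \<partial>lborel)"
    proof (rule nn_integral_mono)
      fix \<xi> :: real
      show "ennreal (exp (- (gam q y + 8))) * indicator {y..y+h} \<xi> \<le> ennreal (indicator {y..} \<xi> * exp (- gam q \<xi>))"
      proof (cases "\<xi> \<in> {y..y+h}")
        case True
        hence "gam q \<xi> \<le> gam q y + 8" using loc[of y \<xi>] \<open>Y0 \<le> y\<close> unfolding h_def by auto
        thus ?thesis using True by (simp add: indicator_def)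
      next
        case False thus ?thesis by simp
      qed
    qed
    moreover have "(\<integral>\<^sup>+ \<xi>. ennreal (exp (- (gam q y + 8))) * indicator {y..y+h} \<xi> \<partial>lborel)
        = ennreal (exp (- (gam q y + 8))) * ennreal h"
      using h0 by (simp add: nn_integral_cmult_indicator)
    ultimately have inner: "ennreal (exp (- (gam q y + 8)) * h)
        \<le> (\<integral>\<^sup>+ \<xi>. ennreal (indicator {y..} \<xi> * exp (- gam q \<xi>)) \<partial>lborel)"
      using h0 by (simp add: ennreal_mult)
    have e1: "exp (gam q y) * exp (- (gam q y + 8)) = exp (-8)"
      by (simp add: exp_add[symmetric])
    have "c * f y = exp (gam q y) * (exp (- (gam q y + 8)) * h)"
      unfolding f_def h_def c_def using True e1 by (simp add: field_simps)
    hence "ennreal (c * f y) = ennreal (exp (gam q y)) * ennreal (exp (- (gam q y + 8)) * h)"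
      using h0 by (simp add: ennreal_mult)
    also have "\<dots> \<le> ennreal (exp (gam q y)) * (\<integral>\<^sup>+ \<xi>. ennreal (indicator {y..} \<xi> * exp (- gam q \<xi>)) \<partial>lborel)"
      by (rule mult_left_mono[OF inner]) simp
    also have "\<dots> = K y" unfolding K_def using True Y0 by simp
    finally show ?thesis .
  qed
  have fb: "(\<lambda>x. indicator {Y0..} x *\<^sub>R (1 / q x)) \<in> borel_measurable borel"
    by (rule borel_measurable_continuous_on_indicator)
       (use q1 in \<open>auto intro!: continuous_intros continuous_on_subset[OF qc] simp: Y0\<close>, fastforce)
  have fm: "f \<in> borel_measurable lborel" using fb unfolding f_def by simp
  have "ennreal c * (\<integral>\<^sup>+ y. ennreal (f y) \<partial>lborel) = (\<integral>\<^sup>+ y. ennreal c * ennreal (f y) \<partial>lborel)"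
    by (rule nn_integral_cmult[symmetric]) (use fm in simp)
  also have "\<dots> = (\<integral>\<^sup>+ y. ennreal (c * f y) \<partial>lborel)"
    using c0 f0 by (simp add: ennreal_mult)
  also have "\<dots> \<le> (\<integral>\<^sup>+ y. K y \<partial>lborel)" by (rule nn_integral_mono) (rule pw)
  finally have "ennreal c * (\<integral>\<^sup>+ y. ennreal (f y) \<partial>lborel) < \<infinity>" using Kfin by simp
  hence ffin: "(\<integral>\<^sup>+ y. ennreal (f y) \<partial>lborel) < \<infinity>" using c0
    by (auto simp: ennreal_mult_less_top)
  have fint: "integrable lborel f"
    by (rule integrableI_bounded[OF fm]) (use ffin f0 in simp)
  define s where "s n x = indicator {Y0 + real n..} x * f x" for n :: nat and x :: real
  have sm: "s n \<in> borel_measurable lborel" for n unfolding s_def using fm by simp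
  have lim: "AE x in lborel. (\<lambda>n. s n x) \<longlonglongrightarrow> 0"
  proof (rule AE_I2)
    fix x :: real
    obtain N :: nat where N: "x - Y0 < real N" using reals_Archimedean2 by blast
    have "eventually (\<lambda>n. s n x = 0) sequentially"
    proof (rule eventually_sequentiallyI[of N])
      fix n assume "N \<le> n"
      hence "x < Y0 + real n" using N by linarith
      thus "s n x = 0" unfolding s_def by simp
    qed
    thus "(\<lambda>n. s n x) \<longlonglongrightarrow> 0" by (rule tendsto_eventually)
  qed
  have bnd: "AE x in lborel. norm (s n x) \<le> f x" for n
    using f0 unfolding s_def by (auto simp: indicator_def)
  have conv: "(\<lambda>n. integral\<^sup>L lborel (s n)) \<longlonglongrightarrow> 0"
    using integral_dominated_convergence[of "\<lambda>x. 0" lborel s f] sm fint lim bnd by simp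
  have sint: "integrable lborel (s n)" for n
    using integrable_dominated_convergence2[of "\<lambda>x. 0" lborel s f] sm fint lim bnd by simp
  from LIMSEQ_D[OF conv eta] obtain N where N: "\<And>n. n \<ge> N \<Longrightarrow> norm (integral\<^sup>L lborel (s n) - 0) < eta"
    by auto
  have sN: "integral\<^sup>L lborel (s N) < eta" using N[of N] by simp
  show ?thesis
  proof (intro exI[of _ "Y0 + real N"] conjI allI impI)
    show "Y0 \<le> Y0 + real N" by simp
    fix a b assume ab: "Y0 + real N \<le> a" "a \<le> b"
    have ci: "continuous_on {a..b} (\<lambda>x. 1 / q x)"
    proof (rule continuous_on_divide[OF continuous_on_const])
      show "continuous_on {a..b} q" by (rule continuous_on_subset[OF qc]) (use ab Y0 in auto)
      show "\<forall>x\<in>{a..b}. q x \<noteq> 0"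
      proof
        fix x assume "x \<in> {a..b}"
        hence "q x \<ge> 1" using q1 ab by simp
        thus "q x \<noteq> 0" by simp
      qed
    qed
    have si: "set_integrable lborel {a..b} (\<lambda>x. 1 / q x)"
      unfolding set_integrable_def by (rule borel_integrable_compact[OF _ ci]) simp
    have "integral {a..b} (\<lambda>x. 1 / q x) = (\<integral>x. indicator {a..b} x *\<^sub>R (1 / q x) \<partial>lborel)"
      using set_borel_integral_eq_integral(2)[OF si] by (simp add: set_lebesgue_integral_def)
    also have "\<dots> \<le> integral\<^sup>L lborel (s N)"
    proof (rule integral_mono)
      show "integrable lborel (\<lambda>x. indicator {a..b} x *\<^sub>R (1 / q x))"
        using si unfolding set_integrable_def .
      show "integrable lborel (s N)" by (rule sint)
      fix x :: real
      show "indicator {a..b} x *\<^sub>R (1 / q x) \<le> s N x"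
      proof (cases "x \<in> {a..b}")
        case True thus ?thesis using ab Y0 unfolding s_def f_def by (simp add: indicator_def)
      next
        case False
        hence "indicator {a..b} x *\<^sub>R (1 / q x) = 0" by simp
        moreover have "0 \<le> s N x" unfolding s_def using f0[of x] by simp
        ultimately show ?thesis by linarith
      qed
    qed
    finally show "integral {a..b} (\<lambda>x. 1 / q x) \<le> eta" using sN by simp
  qed
qed

lemma loc_bound:
  fixes q q' :: "real \<Rightarrow> real"
  assumes qd: "\<And>x. x \<ge> 0 \<Longrightarrow> (q has_real_derivative q' x) (at x within {0..})"
    and Y0: "Y0 \<ge> 0" and q1: "\<And>x. x \<ge> Y0 \<Longrightarrow> q x \<ge> 1"
    and qq: "\<And>x. x \<ge> Y0 \<Longrightarrow> \<bar>q' x\<bar> \<le> (q x)^2 / 4"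
    and x: "Y0 \<le> x" "x \<le> s" "s \<le> x + 2 / q x"
  shows "q s \<le> 2 * q x"
proof -
  define phi where "phi t = inverse (q t) + t / 4" for t
  have "phi x \<le> phi s"
  proof (rule mono_within[of x s phi "\<lambda>t. - (q' t * inverse (q t ^ Suc (Suc 0))) + 1/4"])
    show "x \<le> s" using x(1,2) by simp
    fix t assume t: "x \<le> t" "t \<le> s"
    have qt: "q t \<ge> 1" using q1[of t] t x(1,2) by simp
    have dq: "(q has_real_derivative q' t) (at t within {x..s})"
      by (rule has_field_derivative_subset[OF qd]) (use t x(1,2) Y0 in auto)
    have "((\<lambda>t. inverse (q t)) has_real_derivative - (q' t * inverse (q t ^ Suc (Suc 0)))) (at t within {x..s})"
      by (rule DERIV_inverse_fun[OF dq]) (use qt in simp)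
    from DERIV_add[OF this DERIV_cdivide[OF DERIV_ident, of 4]]
    show "(phi has_real_derivative - (q' t * inverse (q t ^ Suc (Suc 0))) + 1/4) (at t within {x..s})"
      unfolding phi_def by simp
    have "q' t \<le> (q t)^2 / 4" using qq[of t] t x(1,2) by simp
    hence "q' t / (q t)^2 \<le> ((q t)^2 / 4) / (q t)^2" by (rule divide_right_mono) simp
    also have "((q t)^2 / 4) / (q t)^2 = 1/4" using qt by simp
    finally have l: "q' t / (q t)^2 \<le> 1/4" .
    have e: "q t ^ Suc (Suc 0) = (q t)^2" by (simp add: numeral_2_eq_2)
    have "q' t * inverse (q t ^ Suc (Suc 0)) = q' t / (q t)^2" unfolding e by (simp add: divide_inverse)
    thus "0 \<le> - (q' t * inverse (q t ^ Suc (Suc 0))) + 1/4" using l by linarith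
  qed
  moreover have "(s - x) / 4 = s / 4 - x / 4" by (simp add: diff_divide_distrib)
  ultimately have "inverse (q x) - (s - x) / 4 \<le> inverse (q s)" unfolding phi_def by linarith
  moreover have "(s - x) / 4 \<le> inverse (q x) / 2"
  proof -
    have "s - x \<le> 2 / q x" using x(3) by linarith
    hence "(s - x) / 4 \<le> (2 / q x) / 4" by (rule divide_right_mono) simp
    also have "(2 / q x) / 4 = inverse (q x) / 2" by (simp add: inverse_eq_divide)
    finally show ?thesis .
  qed
  ultimately have i1: "inverse (q x) / 2 \<le> inverse (q s)" by linarith
  have i2: "inverse (q x) / 2 = inverse (2 * q x)" by simp
  have qx1: "q x \<ge> 1" using q1 x(1) by simp
  have qs1: "q s \<ge> 1" using q1[of s] x(1,2) by simp
  have i3: "inverse (2 * q x) \<le> inverse (q s)" using i1 i2 by linarith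
  have p1: "0 < 2 * q x" using qx1 by simp
  have p2: "0 < q s" using qs1 by simp
  show ?thesis using i3 inverse_le_iff_le[OF p1 p2] by blast
qed

lemma gam_loc:
  fixes q q' :: "real \<Rightarrow> real"
  assumes qd: "\<And>x. x \<ge> 0 \<Longrightarrow> (q has_real_derivative q' x) (at x within {0..})"
    and Y0: "Y0 \<ge> 0" and q1: "\<And>x. x \<ge> Y0 \<Longrightarrow> q x \<ge> 1"
    and qq: "\<And>x. x \<ge> Y0 \<Longrightarrow> \<bar>q' x\<bar> \<le> (q x)^2 / 4"
    and x: "Y0 \<le> x" "x \<le> s" "s \<le> x + 2 / q x"
  shows "gam q s \<le> gam q x + 8"
proof -
  have qc: "continuous_on {0..} q" by (rule DERIV_continuous_on[OF qd]) auto
  have qi: "q integrable_on {x..s}"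
    by (rule integrable_continuous_real, rule continuous_on_subset[OF qc]) (use x(1,2) Y0 in auto)
  have "integral {x..s} q \<le> integral {x..s} (\<lambda>t. 2 * q x)"
  proof (rule integral_le[OF qi])
    show "(\<lambda>t. 2 * q x) integrable_on {x..s}" by (intro integrable_continuous_real continuous_intros)
    fix t assume t: "t \<in> {x..s}"
    have t1: "x \<le> t" using t by simp
    have "t \<le> s" using t by simp
    hence t2: "t \<le> x + 2 / q x" using x(3) by linarith
    show "q t \<le> 2 * q x" by (rule loc_bound[OF qd Y0 q1 qq x(1) t1 t2])
  qed
  also have "\<dots> = (s - x) * (2 * q x)" using x(1,2) by simp
  also have "\<dots> \<le> (2 / q x) * (2 * q x)"
  proof (rule mult_right_mono)
    show "s - x \<le> 2 / q x" using x(3) by linarith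
    show "0 \<le> 2 * q x" using x(1) q1[of x] by simp
  qed
  also have "\<dots> = 4" using q1[of x] x(1) by simp
  finally have "integral {x..s} q \<le> 4" .
  thus ?thesis using gam_diff[OF qc, of x s] x(1,2) Y0 by simp
qed

lemma amgm_lin:
  fixes X p C :: real
  assumes "X > 0"
  shows "C * p \<le> X * p^2 + C^2 / (4 * X)"
proof -
  have "0 \<le> X * (p - C / (2 * X))^2" using assms by simp
  also have "\<dots> = X * p^2 - C * p + C^2 / (4 * X)"
    using assms by (simp add: power2_eq_square field_simps)
  finally show ?thesis by simp
qed

lemma amgm_lin':
  fixes X p C :: real
  assumes "X > 0"
  shows "C * p \<le> X * p^2 + C^2 / (4 * X)"
proof -
  have "0 \<le> X * (p - C / (2 * X))^2" using assms by simp
  also have "\<dots> = X * p^2 - C * p + C^2 / (4 * X)"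
    using assms by (simp add: power2_eq_square field_simps)
  finally show ?thesis by simp
qed

lemma final_arith:
  fixes a p lam eta Q Y1 y G0 G eps C2 :: real
  assumes a: "a > 0" and eps: "eps > 0" and lam: "lam > 0" and p: "p > 0" and pp: "p^2 = 8 * lam / a^2"
    and eta0: "eta \<ge> 0" and eta1: "eta \<le> 1" and etae: "(32 / a^4 + 32) * eta \<le> eps"
    and Q: "Q \<ge> 0" and Y1: "Y1 \<ge> 0" and y: "y \<ge> Y1"
    and G: "G \<le> G0 + 2 * (y - Y1) * (p / a)" and yb: "y \<ge> 2 * Y1 \<Longrightarrow> y \<le> 2 * eta * p / a"
    and C2: "C2 = 1 + 2 * Y1 / a + 8 * Q / a"
  shows "G + 8 + p + 4 * Q * y + 32 * lam * eta \<le> G0 + 8 + 8 * Q * Y1 + 2 * C2^2 / (eps * a^2) + 2 * eps * lam"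
proof -
  have pa: "p / a > 0" using p a by simp
  have T: "2 * (y - Y1) * (p / a) + 4 * Q * y \<le> 8 * Q * Y1 + (2 * Y1 / a + 8 * Q / a) * p + 32 * eta * lam / a^4"
  proof (cases "y \<ge> 2 * Y1")
    case True
    have yb': "y \<le> 2 * eta * p / a" using yb[OF True] .
    have A1: "2 * (y - Y1) * (p / a) \<le> 2 * y * (p / a)"
      by (rule mult_right_mono) (use Y1 pa in auto)
    have A2: "2 * y * (p / a) \<le> 2 * (2 * eta * p / a) * (p / a)"
      by (rule mult_right_mono) (use yb' pa in auto)
    have A3: "2 * (2 * eta * p / a) * (p / a) = 4 * eta * p^2 / a^2"
      by (simp add: power2_eq_square)
    also have "\<dots> = 32 * eta * lam / a^4"
      unfolding pp using a by (simp add: field_simps power2_eq_square power4_eq_xxxx)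
    finally have A3': "2 * (2 * eta * p / a) * (p / a) = 32 * eta * lam / a^4" .
    have A4a: "2 * eta * p / a \<le> 2 * p / a"
    proof -
      have "eta * (2 * p / a) \<le> 1 * (2 * p / a)" by (rule mult_right_mono) (use eta1 pa in auto)
      moreover have "2 * eta * p / a = eta * (2 * p / a)" by simp
      ultimately show ?thesis by (simp add: mult_ac)
    qed
    have A4: "4 * Q * y \<le> 8 * Q / a * p"
    proof -
      have "4 * Q * y \<le> 4 * Q * (2 * p / a)"
        using yb' A4a Q by (intro mult_left_mono) auto
      also have "\<dots> = 8 * Q / a * p" by simp
      finally show ?thesis .
    qed
    have nn: "0 \<le> 8 * Q * Y1" "0 \<le> 2 * Y1 / a * p" using Q Y1 a p by auto
    have "(2 * Y1 / a + 8 * Q / a) * p = 2 * Y1 / a * p + 8 * Q / a * p" by (simp add: algebra_simps)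
    thus ?thesis using A1 A2 A3' A4 nn by linarith
  next
    case False
    have B1: "2 * (y - Y1) * (p / a) \<le> 2 * Y1 / a * p"
    proof -
      have "y - Y1 \<le> Y1" using False by simp
      hence "2 * (y - Y1) * (p / a) \<le> 2 * Y1 * (p / a)" using pa by (intro mult_right_mono) auto
      also have "2 * Y1 * (p / a) = 2 * Y1 / a * p" by simp
      finally show ?thesis .
    qed
    have B2: "4 * Q * y \<le> 8 * Q * Y1"
    proof -
      have "4 * Q * y \<le> 4 * Q * (2 * Y1)" using False Q by (intro mult_left_mono) auto
      thus ?thesis by simp
    qed
    have nn: "0 \<le> 8 * Q / a * p" "0 \<le> 32 * eta * lam / a^4" using Q a p eta0 lam by auto
    have "(2 * Y1 / a + 8 * Q / a) * p = 2 * Y1 / a * p + 8 * Q / a * p" by (simp add: algebra_simps)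
    thus ?thesis using B1 B2 nn by linarith
  qed
  define X where "X = eps * a^2 / 8"
  have X: "X > 0" unfolding X_def using eps a by simp
  have AM: "C2 * p \<le> X * p^2 + C2^2 / (4 * X)" by (rule amgm_lin'[OF X])
  have X1: "X * p^2 = eps * lam" unfolding X_def pp using a by (simp add: field_simps)
  have X2: "C2^2 / (4 * X) = 2 * C2^2 / (eps * a^2)" unfolding X_def using a eps by (simp add: field_simps)
  have E1: "32 * eta * lam / a^4 + 32 * lam * eta \<le> eps * lam"
  proof -
    have "32 * eta * lam / a^4 + 32 * lam * eta = ((32 / a^4 + 32) * eta) * lam" by (simp add: algebra_simps)
    also have "\<dots> \<le> eps * lam" using etae lam by (intro mult_right_mono) auto
    finally show ?thesis .
  qed
  have C2p: "C2 * p = p + (2 * Y1 / a + 8 * Q / a) * p" unfolding C2 by (simp add: algebra_simps)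
  show ?thesis using G T AM X1 X2 E1 C2p by linarith
qed

theorem propositionC3:
  fixes q q' :: "real \<Rightarrow> real"
    and lam :: "nat \<Rightarrow> real"
    and psi psi' psi'' :: "nat \<Rightarrow> real \<Rightarrow> real"
  assumes q_deriv: "\<And>x. x \<ge> 0 \<Longrightarrow> (q has_real_derivative q' x) (at x within {0..})"
    and q'_cont: "continuous_on {0..} q'"
    and h1: "H1 q" and h2: "H2 q q'" and h3: "H3 q"
    and lam_pos: "0 < lam 1"
    and lam_mono: "\<And>j k. 1 \<le> j \<Longrightarrow> j < k \<Longrightarrow> lam j < lam k"
    and psi_d1: "\<And>k x. k \<ge> 1 \<Longrightarrow> x \<ge> 0 \<Longrightarrow>
                   (psi k has_real_derivative psi' k x) (at x within {0..})"
    and psi_d2: "\<And>k x. k \<ge> 1 \<Longrightarrow> x \<ge> 0 \<Longrightarrow>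
                   (psi' k has_real_derivative psi'' k x) (at x within {0..})"
    and psi_cont2: "\<And>k. k \<ge> 1 \<Longrightarrow> continuous_on {0..} (psi'' k)"
    and psi_eq: "\<And>k x. k \<ge> 1 \<Longrightarrow> x \<ge> 0 \<Longrightarrow>
                   psi'' k x / 2 - q x * psi' k x = - lam k * psi k x"
    and psi_zero: "\<And>k. k \<ge> 1 \<Longrightarrow> psi k 0 = 0"
    and psi_L2: "\<And>k. k \<ge> 1 \<Longrightarrow> (\<lambda>x. (psi k x)\<^sup>2) \<in> borel_measurable (mu q) \<and>
                   integrable (mu q) (\<lambda>x. (psi k x)\<^sup>2)"
    and psi_orth: "\<And>j k. 1 \<le> j \<Longrightarrow> 1 \<le> k \<Longrightarrow>
                   (\<integral>x. psi j x * psi k x \<partial>(mu q)) = (if j = k then 1 else 0)"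
    and psi_bdd: "\<And>k. k \<ge> 1 \<Longrightarrow> \<exists>B. \<forall>x\<ge>0. \<bar>psi k x\<bar> \<le> B"
  shows "\<forall>\<epsilon>>0. \<exists>A::real. \<forall>k\<ge>1. \<forall>x\<ge>0. \<bar>psi k x\<bar> \<le> A * exp (\<epsilon> * lam k)"
proof (intro allI impI)
  fix eps :: real assume eps: "eps > 0"
  have qc: "continuous_on {0..} q" by (rule DERIV_continuous_on[OF q_deriv]) auto
  have qlim: "filterlim q at_top at_top" and q'lim: "((\<lambda>x. q' x / (q x)^2) \<longlongrightarrow> 0) at_top"
    using h2 unfolding H2_def by auto
  obtain a x0 where a: "a > 0" and x0: "x0 \<ge> 0" and H3a: "\<And>x. x \<ge> x0 \<Longrightarrow> Inf (q ` {x..}) \<ge> a * q x"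
    using h3 unfolding H3_def by blast
  have ev1: "eventually (\<lambda>x. 1 \<le> q x) at_top" using qlim by (simp add: filterlim_at_top)
  have ev2: "eventually (\<lambda>x. \<bar>q' x / (q x)^2\<bar> < 1/4) at_top"
    using tendstoD[OF q'lim, of "1/4"] by (simp add: dist_real_def)
  obtain N where N: "\<And>x. x \<ge> N \<Longrightarrow> 1 \<le> q x \<and> \<bar>q' x / (q x)^2\<bar> < 1/4"
    using eventually_conj[OF ev1 ev2] unfolding eventually_at_top_linorder by blast
  define Y0 where "Y0 = max N x0"
  have Y0: "Y0 \<ge> 0" "Y0 \<ge> x0" unfolding Y0_def using x0 by auto
  have q1: "q x \<ge> 1" if "x \<ge> Y0" for x using N[of x] that unfolding Y0_def by auto
  have qq: "\<bar>q' x\<bar> \<le> (q x)^2 / 4" if x: "x \<ge> Y0" for x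
  proof -
    have qx: "(q x)^2 > 0" using q1[OF x] by simp
    have "\<bar>q' x / (q x)^2\<bar> < 1/4" using N[of x] x unfolding Y0_def by auto
    hence "\<bar>q' x\<bar> / (q x)^2 < 1/4" by (simp add: abs_divide)
    hence "\<bar>q' x\<bar> < 1/4 * (q x)^2" using qx by (simp add: divide_less_eq)
    thus ?thesis by simp
  qed
  have H3c: "a * q s \<le> q t" if st: "Y0 \<le> s" "s \<le> t" for s t
  proof -
    have "a * q s \<le> Inf (q ` {s..})" using H3a[of s] st Y0 by simp
    also have "Inf (q ` {s..}) \<le> q t"
    proof (rule cInf_lower)
      show "q t \<in> q ` {s..}" using st by simp
      show "bdd_below (q ` {s..})"
      proof (rule bdd_belowI2[of _ 0])
        fix x assume "x \<in> {s..}"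
        hence "x \<ge> Y0" using st by simp
        thus "0 \<le> q x" using q1[of x] by simp
      qed
    qed
    finally show ?thesis .
  qed
  have gamloc: "\<And>x s. Y0 \<le> x \<Longrightarrow> x \<le> s \<Longrightarrow> s \<le> x + 2 / q x \<Longrightarrow> gam q s \<le> gam q x + 8"
    by (rule gam_loc[OF q_deriv Y0(1) q1 qq])
  obtain xm where xm: "xm \<in> {0..Y0}" "\<And>y. y \<in> {0..Y0} \<Longrightarrow> q xm \<le> q y"
    using continuous_attains_inf[OF compact_Icc _ continuous_on_subset[OF qc], of 0 Y0] Y0 by auto
  define Q where "Q = \<bar>q xm\<bar>"
  have Q0: "Q \<ge> 0" unfolding Q_def by simp
  have qQ: "q x \<ge> - Q" if "x \<ge> 0" for x
  proof (cases "x \<le> Y0")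
    case True thus ?thesis using xm(2)[of x] that unfolding Q_def by auto
  next
    case False thus ?thesis using q1[of x] Q0 by simp
  qed
  define eta where "eta = min 1 (eps / (32 / a^4 + 32))"
  have den: "32 / a^4 + 32 > 0" using a by (simp add: add_pos_pos)
  have eta0: "eta > 0" unfolding eta_def using eps den by simp
  have eta1: "eta \<le> 1" unfolding eta_def by simp
  have etae: "(32 / a^4 + 32) * eta \<le> eps"
  proof -
    have "eta \<le> eps / (32 / a^4 + 32)" unfolding eta_def by simp
    hence "(32 / a^4 + 32) * eta \<le> (32 / a^4 + 32) * (eps / (32 / a^4 + 32))"
      using den by (intro mult_left_mono) auto
    thus ?thesis using den by simp
  qed
  obtain Y1 where Y1: "Y1 \<ge> Y0" and tail: "\<And>s t. Y1 \<le> s \<Longrightarrow> s \<le> t \<Longrightarrow> integral {s..t} (\<lambda>x. 1 / q x) \<le> eta"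
    using H1_tail[OF qc h1 Y0(1) q1 gamloc eta0] by blast
  have Y10: "Y1 \<ge> 0" using Y1 Y0 by simp
  define C2 where "C2 = 1 + 2 * Y1 / a + 8 * Q / a"
  define K0 where "K0 = gam q Y1 + 8 + 8 * Q * Y1 + q Y1 + 2 * C2^2 / (eps * a^2)"
  show "\<exists>A::real. \<forall>k\<ge>1. \<forall>x\<ge>0. \<bar>psi k x\<bar> \<le> A * exp (eps * lam k)"
  proof (intro exI[of _ "exp (K0 / 2)"] allI impI)
    fix k :: nat and z :: real assume k: "1 \<le> k" and z: "0 \<le> z"
    have lpos: "lam k > 0"
    proof (cases "k = 1")
      case True thus ?thesis using lam_pos by simp
    next
      case False thus ?thesis using lam_mono[of 1 k] k lam_pos by simp
    qed
    obtain B where B: "\<And>x. x \<ge> 0 \<Longrightarrow> \<bar>psi k x\<bar> \<le> B" using psi_bdd[OF k] by blast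
    have ode: "psi'' k x = 2 * q x * psi' k x - 2 * lam k * psi k x" if "x \<ge> 0" for x
      using psi_eq[OF k that] by linarith
    define p where "p = sqrt (8 * lam k) / a"
    have p0: "p > 0" unfolding p_def using lpos a by simp
    have pp: "p^2 = 8 * lam k / a^2" unfolding p_def using lpos by (simp add: power_divide)
    have ap: "a * p = sqrt (8 * lam k)" unfolding p_def using a by simp
    obtain y where y: "y \<ge> Y1" "q y \<ge> p" "y = Y1 \<or> q y = p"
    proof (cases "q Y1 \<ge> p")
      case True thus ?thesis using that[of Y1] by simp
    next
      case False
      have "eventually (\<lambda>x. p \<le> q x) at_top" using qlim by (simp add: filterlim_at_top)
      then obtain N2 where N2: "\<And>x. x \<ge> N2 \<Longrightarrow> p \<le> q x" unfolding eventually_at_top_linorder by blast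
      define Z where "Z = max N2 Y1"
      have "\<exists>x. Y1 \<le> x \<and> x \<le> Z \<and> q x = p"
        by (rule IVT') (use False N2[of Z] continuous_on_subset[OF qc, of "{Y1..Z}"] Y10 in \<open>auto simp: Z_def\<close>)
      then obtain x where "Y1 \<le> x" "q x = p" by blast
      thus ?thesis using that[of x] by simp
    qed
    have yY0: "Y0 \<le> y" using y(1) Y1 by simp
    have y0: "y \<ge> 0" using yY0 Y0 by simp
    have qy1: "q y \<ge> 1" using q1[OF yY0] .
    have qy8: "8 * lam k \<le> (q x)^2" if "x \<ge> y" for x
    proof -
      have "sqrt (8 * lam k) = a * p" using ap by simp
      also have "\<dots> \<le> a * q y" using y(2) a by simp
      also have "\<dots> \<le> q x" using H3c[OF yY0 that] .
      finally show ?thesis by (rule sqrt_le_D)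
    qed
    have qposy: "q x > 0" if "x \<ge> y" for x using q1[of x] that yY0 by simp
    have qd4y: "- ((q x)^2) \<le> 4 * q' x" if "x \<ge> y" for x using qq[of x] that yY0 by (simp add: abs_le_iff)
    have taily: "integral {y..t} (\<lambda>x. 1 / q x) \<le> eta" if "t \<ge> y" for t
      using tail[OF y(1) that] .
    define d where "d = 2 / q y"
    have d0: "d \<ge> 0" unfolding d_def using qy1 by simp
    define W where "W = exp (gam q y + 8) * q y / 4"
    have L2: "c \<le> W" if hc: "\<And>s. y \<le> s \<Longrightarrow> s \<le> y + d \<Longrightarrow> c \<le> (psi k s)^2" for c
    proof (cases "c \<le> 0")
      case True
      moreover have "W > 0" unfolding W_def using qy1 by simp
      ultimately show ?thesis by simp
    next
      case False
      define E where "E = exp (- (gam q y + 8))"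
      have E0: "E > 0" unfolding E_def by simp
      have "(2 * E * c) * d \<le> 1"
      proof (rule L2_lower[OF qc _ _ _ y0 d0])
        show "(\<lambda>x. (psi k x)^2) \<in> borel_measurable (mu q)" using psi_L2[OF k] by simp
        show "integrable (mu q) (\<lambda>x. (psi k x)^2)" using psi_L2[OF k] by simp
        show "(\<integral>x. psi k x * psi k x \<partial>(mu q)) = 1" using psi_orth[OF k k] by simp
        fix s assume s: "y \<le> s" "s \<le> y + d"
        have "gam q s \<le> gam q y + 8" using gamloc[OF yY0 s(1)] s(2) unfolding d_def by simp
        hence "E \<le> exp (- gam q s)" unfolding E_def by simp
        moreover have "c \<le> (psi k s)^2" using hc[OF s] .
        ultimately have "E * c \<le> exp (- gam q s) * (psi k s)^2"
          using False E0 by (intro mult_mono) auto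
        thus "2 * E * c \<le> 2 * exp (- gam q s) * (psi k s)^2" by simp
      qed
      hence cc: "c * (4 * E / q y) \<le> 1" unfolding d_def by (simp add: mult_ac)
      have pos: "4 * E / q y > 0" using E0 qy1 by simp
      have "c \<le> 1 / (4 * E / q y)" using cc by (subst pos_le_divide_eq[OF pos])
      also have "1 / (4 * E / q y) = W"
      proof -
        have ee: "exp (gam q y + 8) * exp (- gam q y - 8) = 1" by (simp add: exp_add[symmetric])
        show ?thesis unfolding W_def E_def using ee by (simp add: field_simps)
      qed
      finally show ?thesis .
    qed
    have sb: "(psi k z)^2 \<le> 2 * W * exp (4 * Q * y + 32 * lam k * eta)"
      by (rule sol_bound[OF q_deriv psi_d1[OF k] psi_d2[OF k] ode B lpos y0 Q0 d0 qQ qposy qy8 qd4y taily L2 z])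
    have "2 * W * exp (4 * Q * y + 32 * lam k * eta)
        = exp (gam q y + 8) * (q y / 2) * exp (4 * Q * y + 32 * lam k * eta)" unfolding W_def by simp
    also have "\<dots> \<le> exp (gam q y + 8) * exp (q y) * exp (4 * Q * y + 32 * lam k * eta)"
    proof -
      have "q y / 2 \<le> exp (q y)" using exp_ge_add_one_self[of "q y"] qy1 by linarith
      thus ?thesis by (intro mult_right_mono mult_left_mono) auto
    qed
    also have "\<dots> = exp (gam q y + 8 + q y + 4 * Q * y + 32 * lam k * eta)"
      by (simp add: exp_add[symmetric] add.assoc)
    finally have s2: "(psi k z)^2 \<le> exp (gam q y + 8 + q y + 4 * Q * y + 32 * lam k * eta)"
      using sb by linarith
    have gy: "gam q y \<le> gam q Y1 + 2 * (y - Y1) * (q y / a)"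
    proof -
      have qi: "q integrable_on {Y1..y}"
        by (rule integrable_continuous_real, rule continuous_on_subset[OF qc]) (use Y10 in auto)
      have "integral {Y1..y} q \<le> integral {Y1..y} (\<lambda>t. q y / a)"
      proof (rule integral_le[OF qi])
        show "(\<lambda>t. q y / a) integrable_on {Y1..y}" by (intro integrable_continuous_real continuous_intros)
        fix t assume t: "t \<in> {Y1..y}"
        have "a * q t \<le> q y" using H3c[of t y] t Y1 by simp
        thus "q t \<le> q y / a" using a by (simp add: le_divide_eq mult.commute)
      qed
      also have "\<dots> = (y - Y1) * (q y / a)" using y(1) by simp
      finally have "integral {Y1..y} q \<le> (y - Y1) * (q y / a)" .
      moreover have "2 * (y - Y1) * (q y / a) = 2 * ((y - Y1) * (q y / a))" by simp
      ultimately show ?thesis using gam_diff[OF qc Y10 y(1)] by linarith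
    qed
    have expo: "gam q y + 8 + q y + 4 * Q * y + 32 * lam k * eta \<le> K0 + 2 * eps * lam k"
    proof (cases "y = Y1")
      case True
      have "32 * lam k * eta \<le> eps * lam k"
      proof -
        have "32 * eta \<le> (32 / a^4 + 32) * eta" using eta0 a by (simp add: distrib_right)
        hence "32 * eta \<le> eps" using etae by simp
        thus ?thesis using lpos by (simp add: mult.commute mult_right_mono)
      qed
      moreover have "4 * Q * Y1 \<le> 8 * Q * Y1" using Q0 Y10 by simp
      moreover have "0 \<le> 2 * C2^2 / (eps * a^2)" using eps a by simp
      moreover have "0 \<le> eps * lam k" using eps lpos by simp
      ultimately show ?thesis unfolding K0_def True by linarith
    next
      case False
      hence qyp: "q y = p" using y(3) by simp
      have yb: "y \<le> 2 * eta * p / a" if y2: "y \<ge> 2 * Y1"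
      proof -
        have hY: "Y1 \<le> y / 2" using y2 by simp
        have hy: "y / 2 \<le> y" using y0 by simp
        have ci: "continuous_on {y/2..y} (\<lambda>x. 1 / q x)"
        proof (rule continuous_on_divide[OF continuous_on_const])
          show "continuous_on {y/2..y} q" by (rule continuous_on_subset[OF qc]) (use y0 in auto)
          show "\<forall>x\<in>{y/2..y}. q x \<noteq> 0"
          proof
            fix x assume "x \<in> {y/2..y}"
            hence "x \<ge> Y0" using hY Y1 by simp
            thus "q x \<noteq> 0" using q1[of x] by simp
          qed
        qed
        have "integral {y/2..y} (\<lambda>t. a / p) \<le> integral {y/2..y} (\<lambda>x. 1 / q x)"
        proof (rule integral_le)
          show "(\<lambda>t. a / p) integrable_on {y/2..y}" by (intro integrable_continuous_real continuous_intros)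
          show "(\<lambda>x. 1 / q x) integrable_on {y/2..y}" by (rule integrable_continuous_real[OF ci])
          fix t assume t: "t \<in> {y/2..y}"
          hence tY: "Y0 \<le> t" "t \<le> y" using hY Y1 by auto
          have "a * q t \<le> p" using H3c[OF tY] qyp by simp
          moreover have "q t > 0" using q1[OF tY(1)] by simp
          ultimately show "a / p \<le> 1 / q t" using p0 a by (simp add: divide_simps mult.commute)
        qed
        also have "\<dots> \<le> eta" using tail[OF hY hy] .
        finally have "(y - y/2) * (a / p) \<le> eta" using hy by simp
        hence "y * a \<le> 2 * eta * p" using p0 by (simp add: field_simps)
        thus ?thesis using a by (simp add: le_divide_eq mult.commute)
      qed
      have fa: "gam q y + 8 + p + 4 * Q * y + 32 * lam k * eta
          \<le> gam q Y1 + 8 + 8 * Q * Y1 + 2 * C2^2 / (eps * a^2) + 2 * eps * lam k"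
        by (rule final_arith[OF a eps lpos p0 pp less_imp_le[OF eta0] eta1 etae Q0 Y10 y(1) _ yb C2_def])
           (use gy qyp in simp)
      have "0 \<le> q Y1" using q1[of Y1] Y1 by simp
      thus ?thesis using fa qyp unfolding K0_def by linarith
    qed
    have "(psi k z)^2 \<le> exp (K0 + 2 * eps * lam k)"
      using s2 expo by (meson exp_le_cancel_iff order_trans)
    also have "exp (K0 + 2 * eps * lam k) = (exp (K0 / 2) * exp (eps * lam k))^2"
      by (simp add: power2_eq_square exp_add[symmetric])
    finally have "\<bar>psi k z\<bar>^2 \<le> (exp (K0 / 2) * exp (eps * lam k))^2" by simp
    thus "\<bar>psi k z\<bar> \<le> exp (K0 / 2) * exp (eps * lam k)"
      by (rule power2_le_imp_le) simp
  qed
qed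

end
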